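(* Fix $p^s\in\mathbb{R}$ and let $$\mathcal{E}=\{(z,p^d,p^c)\in\mathbb{R}^3:\ p^d\ge0,\ p^c\ge0,\ p^dp^c=0,\ z\ge(p^d)^2+(p^c)^2-2p^dp^s+2p^cp^s+(p^s)^2\}.$$ Then $$\mathrm{conv}(\mathcal{E})=\{(z,p^d,p^c)\in\mathbb{R}^3:\ p^d\ge0,\ p^c\ge0,\ z\ge(p^d+p^c)^2-2p^dp^s+2p^cp^s+(p^s)^2\}.$$ Equivalently, writing $x=(p^d,p^c,z)^\top$, $A=\begin{pmatrix}1&1&0\\0&0&0\\0&0&0\end{pmatrix}$, $b=(-2p^s,\,2p^s,\,-1)^\top$, $c=(p^s)^2$, the convex hull is the set of $(z,p^d,p^c)$ with $p^d,p^c\ge0$ and the second-order cone constraint $$\left\|\begin{pmatrix}\tfrac12 b^\top x+\tfrac{1+c}{2}\\ Ax\end{pmatrix}\right\|_2\le\tfrac12\left(1-b^\top x-c\right).$$ *)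

theory Defs
  imports "HOL-Analysis.Analysis"
begin

end

theory Submission
  imports Defs
begin

lemma sq_convex_aux:
  fixes u v a b :: real
  assumes "u \<ge> 0" "v \<ge> 0" "u + v = 1"
  shows "(u * a + v * b)\<^sup>2 \<le> u * a\<^sup>2 + v * b\<^sup>2"
proof -
  have v: "v = 1 - u" using assms(3) by simp
  have "u * a\<^sup>2 + v * b\<^sup>2 - (u * a + v * b)\<^sup>2 = u * v * (a-b)\<^sup>2"
    unfolding v by (simp add: power2_eq_square algebra_simps)
  moreover have "u * v * (a-b)\<^sup>2 \<ge> 0" using assms by simp
  ultimately show ?thesis by linarith
qed

theorem theorem2:
  fixes ps :: real
  shows "convex hull {(z :: real, pd :: real, pc :: real).
            pd \<ge> 0 \<and> pc \<ge> 0 \<and> pd * pc = 0 \<and>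
            z \<ge> pd\<^sup>2 + pc\<^sup>2 - 2 * pd * ps + 2 * pc * ps + ps\<^sup>2}
       = {(z :: real, pd :: real, pc :: real).
            pd \<ge> 0 \<and> pc \<ge> 0 \<and>
            z \<ge> (pd + pc)\<^sup>2 - 2 * pd * ps + 2 * pc * ps + ps\<^sup>2}"
  (is "convex hull ?E = ?R")
proof
  have sub: "?E \<subseteq> ?R"
  proof
    fix x assume "x \<in> ?E"
    then obtain z d c where x: "x = (z,d,c)" and h: "d \<ge> 0" "c \<ge> 0" "d * c = 0"
      "z \<ge> d\<^sup>2 + c\<^sup>2 - 2 * d * ps + 2 * c * ps + ps\<^sup>2" by auto
    have "(d+c)\<^sup>2 = d\<^sup>2 + c\<^sup>2" using h(3) by (simp add: power2_eq_square algebra_simps)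
    then show "x \<in> ?R" using h x by auto
  qed
  have cvx: "convex ?R"
    unfolding convex_def
  proof (intro ballI allI impI)
    fix x y :: "real \<times> real \<times> real" and u v :: real
    assume x: "x \<in> ?R" and y: "y \<in> ?R" and uv: "0 \<le> u" "0 \<le> v" "u + v = 1"
    obtain z1 d1 c1 where x': "x = (z1,d1,c1)" by (cases x) auto
    obtain z2 d2 c2 where y': "y = (z2,d2,c2)" by (cases y) auto
    have h1: "d1 \<ge> 0" "c1 \<ge> 0" "z1 \<ge> (d1 + c1)\<^sup>2 - 2 * d1 * ps + 2 * c1 * ps + ps\<^sup>2"
      using x x' by auto
    have h2: "d2 \<ge> 0" "c2 \<ge> 0" "z2 \<ge> (d2 + c2)\<^sup>2 - 2 * d2 * ps + 2 * c2 * ps + ps\<^sup>2"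
      using y y' by auto
    have sq: "(u * (d1+c1) + v * (d2+c2))\<^sup>2 \<le> u * (d1+c1)\<^sup>2 + v * (d2+c2)\<^sup>2"
      using sq_convex_aux uv by blast
    have a: "u * z1 \<ge> u * ((d1 + c1)\<^sup>2 - 2 * d1 * ps + 2 * c1 * ps + ps\<^sup>2)"
      using h1(3) uv(1) by (rule mult_left_mono)
    have b: "v * z2 \<ge> v * ((d2 + c2)\<^sup>2 - 2 * d2 * ps + 2 * c2 * ps + ps\<^sup>2)"
      using h2(3) uv(2) by (rule mult_left_mono)
    have e: "u * (d1+c1) + v * (d2+c2) = (u * d1+v * d2) + (u * c1+v * c2)" by (simp add: algebra_simps)
    have ps2: "u * ps\<^sup>2 + v * ps\<^sup>2 = ps\<^sup>2" using uv(3) by (metis distrib_right mult_1)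
    have "u * z1 + v * z2 \<ge> ((u * d1+v * d2) + (u * c1+v * c2))\<^sup>2 - 2 * (u * d1+v * d2) * ps + 2 * (u * c1+v * c2) * ps + ps\<^sup>2"
      using a b sq e ps2 by (simp add: algebra_simps)
    then show "u *\<^sub>R x + v *\<^sub>R y \<in> ?R" using x' y' h1 h2 uv by auto
  qed
  show "convex hull ?E \<subseteq> ?R" using sub cvx by (rule hull_minimal)
  show "?R \<subseteq> convex hull ?E"
  proof
    fix x assume "x \<in> ?R"
    then obtain z d c where x: "x = (z,d,c)" and h: "d \<ge> 0" "c \<ge> 0"
      "z \<ge> (d + c)\<^sup>2 - 2 * d * ps + 2 * c * ps + ps\<^sup>2" by auto
    show "x \<in> convex hull ?E"
    proof (cases "d = 0 \<or> c = 0")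
      case True
      then have "x \<in> ?E" using h x by (auto simp: power2_eq_square algebra_simps)
      then show ?thesis by (rule hull_inc)
    next
      case False
      define t where "t = d + c"
      have t: "t > 0" using False h unfolding t_def by auto
      define l where "l = d / t"
      define e where "e = z - ((d + c)\<^sup>2 - 2 * d * ps + 2 * c * ps + ps\<^sup>2)"
      have e0: "e \<ge> 0" using h unfolding e_def by simp
      define z1 where "z1 = t\<^sup>2 - 2 * t * ps + ps\<^sup>2 + e"
      define z2 where "z2 = t\<^sup>2 + 2 * t * ps + ps\<^sup>2 + e"
      have A: "(z1, t, 0) \<in> ?E" using t e0 unfolding z1_def by auto
      have B: "(z2, 0, t) \<in> ?E" using t e0 unfolding z2_def by auto
      have l0: "l \<ge> 0" "1 - l \<ge> 0" using t h unfolding l_def t_def by auto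
      have ld: "l * t = d" using t unfolding l_def by simp
      have lc: "(1 - l) * t = c" using ld unfolding t_def by (simp add: algebra_simps)
      have lz: "l * z1 + (1-l) * z2 = z"
      proof -
        have "l * z1 + (1-l) * z2 = t\<^sup>2 + ps\<^sup>2 + e - 2 * (l * t) * ps + 2 * ((1-l) * t) * ps"
          unfolding z1_def z2_def by (simp add: algebra_simps)
        also have "\<dots> = z" unfolding ld lc e_def t_def[symmetric] by simp
        finally show ?thesis .
      qed
      have "l *\<^sub>R (z1, t, 0) + (1 - l) *\<^sub>R (z2, 0, t) \<in> convex hull ?E"
        using convexD[OF convex_convex_hull hull_inc[OF A] hull_inc[OF B] l0] by simp
      moreover have "l *\<^sub>R (z1, t, 0) + (1 - l) *\<^sub>R (z2, 0, (t::real)) = x"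
        using lz ld lc x by simp
      ultimately show ?thesis by simp
    qed
  qed
qed
end
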